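(* Let $\mathscr{D}_1=\{C_{3,1},C_{3,2},C_{3,3},C_{4,1},C_{4,2},C_{4,3},C_{5,1},C_{5,2},C_{5,3}\}$ and $\mathscr{D}_2=\{C_3,C_4,C_5\}$. Let $\mathscr{F}$ be the family of all graphs $G$ obtained as follows: take a single vertex $v$, graphs $A_1,\dots,A_t\in\mathscr{D}_1$ and graphs $B_1,\dots,B_s\in\mathscr{D}_2$, where $s,t\geq 0$ and $s+t\geq 2$ (all these graphs vertex-disjoint), and identify the leaf of each $A_i$ and one vertex of each $B_j$ with $v$. Let $G_4$ be the graph in $\mathscr{F}$ obtained with one gadget $C_4$ and one gadget $C_{4,1}$ (explicitly: vertices $a,a_1,a_2,a_3,b_1,b_2,b_3,b_4$ and edges $aa_1,aa_2,aa_3,a_2b_4,a_3b_4,a_1b_1,b_1b_2,b_2b_3,b_3a_1$), and let $G_5$ be the graph in $\mathscr{F}$ obtained with one gadget $C_4$ and one gadget $C_5$. If $G\in\mathscr{F}\setminus\{G_4,G_5\}$, then $\gamma^{d}_2(G)\leq \frac{|V(G)|}{3}$.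
   Context: All graphs are finite and simple. A set $S$ of vertices of a graph $G$ is a disjunctive dominating set of $G$ if every vertex not in $S$ is adjacent to a vertex of $S$ or has at least two vertices of $S$ at distance exactly $2$ from it in $G$. The disjunctive domination number $\gamma^{d}_2(G)$ is the minimum cardinality of a disjunctive dominating set of $G$. $C_n$ denotes the cycle on $n$ vertices. For $s\geq 3$ and $t\geq 1$, $C_{s,t}$ denotes the graph obtained from a cycle $C_s$ and a path with $t$ edges by identifying one end vertex of the path with a vertex of the cycle; the other end vertex of the path (a vertex of degree $1$) is called the leaf of $C_{s,t}$. Thus $C_{s,t}$ has $s+t$ vertices. *)

theory Defs
  imports Complex_Main
begin

definition dist2 :: "'a set \<Rightarrow> ('a \<Rightarrow> 'a \<Rightarrow> bool) \<Rightarrow> 'a \<Rightarrow> 'a \<Rightarrow> bool" where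
  "dist2 V E u w \<longleftrightarrow> u \<noteq> w \<and> \<not> E u w \<and> (\<exists>z\<in>V. E u z \<and> E z w)"

definition disj_dom :: "'a set \<Rightarrow> ('a \<Rightarrow> 'a \<Rightarrow> bool) \<Rightarrow> 'a set \<Rightarrow> bool" where
  "disj_dom V E S \<longleftrightarrow> S \<subseteq> V \<and>
     (\<forall>u\<in>V - S. (\<exists>w\<in>S. E u w) \<or> card {w\<in>S. dist2 V E u w} \<ge> 2)"

definition gamma_d2 :: "'a set \<Rightarrow> ('a \<Rightarrow> 'a \<Rightarrow> bool) \<Rightarrow> nat" where
  "gamma_d2 V E = Min {card S | S. disj_dom V E S}"

definition graph_iso :: "'a set \<Rightarrow> ('a \<Rightarrow> 'a \<Rightarrow> bool) \<Rightarrow> 'b set \<Rightarrow> ('b \<Rightarrow> 'b \<Rightarrow> bool) \<Rightarrow> bool" where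
  "graph_iso V E V' E' \<longleftrightarrow> (\<exists>f. bij_betw f V V' \<and> (\<forall>x\<in>V. \<forall>y\<in>V. E x y \<longleftrightarrow> E' (f x) (f y)))"

datatype gadget = Cyc nat | Pend nat nat  \<comment> \<open>Cyc s = C_s, Pend s t = C_{s,t}\<close>

text \<open>Local vertex sets: C_s on 0..s-1 (cycle i ~ i+1 mod s); C_{s,t} on 0..s+t-1, cycle on
 0..s-1, path 0 - s - s+1 - ... - s+t-1 with t edges, leaf s+t-1.\<close>
fun gverts :: "gadget \<Rightarrow> nat set" where
  "gverts (Cyc s) = {..<s}"
| "gverts (Pend s t) = {..<s+t}"

definition cyc_edge :: "nat \<Rightarrow> nat \<Rightarrow> nat \<Rightarrow> bool" where
  "cyc_edge s j k \<longleftrightarrow> j < s \<and> k < s \<and> (k = (j + 1) mod s \<or> j = (k + 1) mod s)"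

definition pathv :: "nat \<Rightarrow> nat \<Rightarrow> nat" where
  "pathv s m = (if m = 0 then 0 else s + m - 1)"

fun gedge :: "gadget \<Rightarrow> nat \<Rightarrow> nat \<Rightarrow> bool" where
  "gedge (Cyc s) j k = cyc_edge s j k"
| "gedge (Pend s t) j k = (cyc_edge s j k \<or>
     (\<exists>m<t. (j = pathv s m \<and> k = pathv s (m+1)) \<or> (k = pathv s m \<and> j = pathv s (m+1))))"

text \<open>Vertex identified with the common vertex v: any vertex (0) of C_s, the leaf of C_{s,t}.\<close>
fun gattach :: "gadget \<Rightarrow> nat" where
  "gattach (Cyc s) = 0"
| "gattach (Pend s t) = s + t - 1"

definition D1 :: "gadget set" where
  "D1 = {Pend s t | s t. s \<in> {3,4,5} \<and> t \<in> {1,2,3}}"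

definition D2 :: "gadget set" where
  "D2 = {Cyc s | s. s \<in> {3,4,5}}"

section \<open>The glued graph: None is the common vertex v, Some (i,j) is local vertex j of gadget i\<close>

definition emb :: "gadget list \<Rightarrow> nat \<Rightarrow> nat \<Rightarrow> (nat \<times> nat) option" where
  "emb gs i j = (if j = gattach (gs ! i) then None else Some (i, j))"

definition famV :: "gadget list \<Rightarrow> (nat \<times> nat) option set" where
  "famV gs = insert None {emb gs i j | i j. i < length gs \<and> j \<in> gverts (gs ! i)}"

definition famE :: "gadget list \<Rightarrow> (nat \<times> nat) option \<Rightarrow> (nat \<times> nat) option \<Rightarrow> bool" where
  "famE gs x y \<longleftrightarrow> (\<exists>i<length gs. \<exists>j k. j \<in> gverts (gs ! i) \<and> k \<in> gverts (gs ! i) \<and>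
      gedge (gs ! i) j k \<and> x = emb gs i j \<and> y = emb gs i k)"

definition in_famF :: "'a set \<Rightarrow> ('a \<Rightarrow> 'a \<Rightarrow> bool) \<Rightarrow> bool" where
  "in_famF V E \<longleftrightarrow> (\<exists>gs. length gs \<ge> 2 \<and> set gs \<subseteq> D1 \<union> D2 \<and> graph_iso V E (famV gs) (famE gs))"

definition G4V where "G4V = famV [Cyc 4, Pend 4 1]"
definition G4E where "G4E = famE [Cyc 4, Pend 4 1]"
definition G5V where "G5V = famV [Cyc 4, Cyc 5]"
definition G5E where "G5E = famE [Cyc 4, Cyc 5]"

end

theory Submission
  imports Defs
begin


definition ld2 :: "gadget \<Rightarrow> nat \<Rightarrow> nat \<Rightarrow> bool" where
  "ld2 g j k \<longleftrightarrow> j \<noteq> k \<and> \<not> gedge g j k \<and> (\<exists>z\<in>gverts g. gedge g j z \<and> gedge g z k)"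

definition ldom :: "gadget \<Rightarrow> nat list \<Rightarrow> bool \<Rightarrow> bool \<Rightarrow> nat \<Rightarrow> bool" where
  "ldom g L vin one j \<longleftrightarrow> j \<in> set L \<or> (\<exists>k\<in>set L. gedge g j k) \<or> (vin \<and> gedge g j (gattach g)) \<or>
     2 \<le> length (filter (ld2 g j) L) + (if vin \<and> ld2 g j (gattach g) then 1 else 0)
         + (if one \<and> gedge g j (gattach g) then 1::nat else 0)"

lemma cyc_edge_eq: "3 \<le> s \<Longrightarrow> cyc_edge s j k \<longleftrightarrow> j<s \<and> k<s \<and> (k = j+1 \<or> j = k+1 \<or> (j=0 \<and> k = s-1) \<or> (k=0 \<and> j=s-1))"
proof -
  assume s: "3 \<le> s"
  have m: "\<And>x. x < s \<Longrightarrow> Suc x mod s = (if Suc x < s then Suc x else 0)"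
    by (metis Suc_lessI mod_less mod_self)
  show ?thesis
  proof (cases "j<s \<and> k<s")
    case True
    then show ?thesis using s by (auto simp: cyc_edge_def m split: if_splits)
  next
    case False
    then show ?thesis by (auto simp: cyc_edge_def)
  qed
qed

lemma path_eq: "0 < s \<Longrightarrow> (\<exists>m<t. (j = pathv s m \<and> k = pathv s (m+1)) \<or> (k = pathv s m \<and> j = pathv s (m+1))) \<longleftrightarrow>
   (0<t \<and> ((j=0 \<and> k=s) \<or> (s\<le>j \<and> k=j+1 \<and> k<s+t) \<or> (k=0 \<and> j=s) \<or> (s\<le>k \<and> j=k+1 \<and> j<s+t)))"
proof
  assume s: "0<s"
  assume "\<exists>m<t. (j = pathv s m \<and> k = pathv s (m+1)) \<or> (k = pathv s m \<and> j = pathv s (m+1))"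
  then obtain m where "m<t" "(j = pathv s m \<and> k = pathv s (m+1)) \<or> (k = pathv s m \<and> j = pathv s (m+1))" by blast
  then show "0<t \<and> ((j=0 \<and> k=s) \<or> (s\<le>j \<and> k=j+1 \<and> k<s+t) \<or> (k=0 \<and> j=s) \<or> (s\<le>k \<and> j=k+1 \<and> j<s+t))"
    using s by (cases "m=0") (auto simp: pathv_def)
next
  assume s: "0<s"
  assume h: "0<t \<and> ((j=0 \<and> k=s) \<or> (s\<le>j \<and> k=j+1 \<and> k<s+t) \<or> (k=0 \<and> j=s) \<or> (s\<le>k \<and> j=k+1 \<and> j<s+t))"
  show "\<exists>m<t. (j = pathv s m \<and> k = pathv s (m+1)) \<or> (k = pathv s m \<and> j = pathv s (m+1))"
  proof -
    { assume "j=0 \<and> k=s" then have ?thesis using h s by (intro exI[of _ 0]) (auto simp: pathv_def) }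
    moreover
    { assume "k=0 \<and> j=s" then have ?thesis using h s by (intro exI[of _ 0]) (auto simp: pathv_def) }
    moreover
    { assume a: "s\<le>j \<and> k=j+1 \<and> k<s+t" then have ?thesis using s
        by (intro exI[of _ "j+1-s"]) (auto simp: pathv_def) }
    moreover
    { assume a: "s\<le>k \<and> j=k+1 \<and> j<s+t" then have ?thesis using s
        by (intro exI[of _ "k+1-s"]) (auto simp: pathv_def) }
    ultimately show ?thesis using h by blast
  qed
qed

lemma gedge_Cyc: "3 \<le> s \<Longrightarrow> gedge (Cyc s) j k \<longleftrightarrow> j<s \<and> k<s \<and> (k = j+1 \<or> j = k+1 \<or> (j=0 \<and> k = s-1) \<or> (k=0 \<and> j=s-1))"
  by (simp add: cyc_edge_eq)
lemma gedge_Pend: "3 \<le> s \<Longrightarrow> gedge (Pend s t) j k \<longleftrightarrow> (j<s \<and> k<s \<and> (k = j+1 \<or> j = k+1 \<or> (j=0 \<and> k = s-1) \<or> (k=0 \<and> j=s-1))) \<or>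
   (0<t \<and> ((j=0 \<and> k=s) \<or> (s\<le>j \<and> k=j+1 \<and> k<s+t) \<or> (k=0 \<and> j=s) \<or> (s\<le>k \<and> j=k+1 \<and> j<s+t)))"
  by (simp only: gedge.simps cyc_edge_eq path_eq)



lemmas evs = ldom_def ld2_def gedge_Cyc gedge_Pend lessThan_nat_numeral

declare gedge.simps[simp del]

definition Zs :: "gadget set" where "Zs = {Pend 3 1, Pend 4 3, Pend 5 2, Cyc 4}"
definition Os :: "gadget set" where "Os = {Pend 3 2, Pend 5 3, Pend 4 1, Cyc 5}"

definition selA :: "gadget \<Rightarrow> nat list" where
  "selA g = (if g = Pend 3 1 then [0] else if g = Pend 3 2 then [0] else if g = Pend 3 3 then [0]
    else if g = Pend 4 1 then [1] else if g = Pend 4 2 then [2] else if g = Pend 4 3 then [0,1]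
    else if g = Pend 5 1 then [2] else if g = Pend 5 2 then [0,1] else if g = Pend 5 3 then [0,1]
    else if g = Cyc 4 then [1] else if g = Cyc 5 then [1] else [])"

definition selB :: "gadget \<Rightarrow> nat list" where
  "selB g = (if g = Pend 3 1 then [0] else if g = Pend 4 3 then [2,5] else if g = Pend 5 2 then [2,5]
    else if g = Cyc 4 then [2] else if g = Pend 3 2 then [0] else if g = Pend 5 3 then [2,5] else [])"

definition selC :: "gadget \<Rightarrow> nat list" where
  "selC g = (if g = Cyc 4 then [1] else if g = Pend 4 1 then [2] else if g = Cyc 5 then [2] else selB g)"

definition sz :: "gadget \<Rightarrow> nat" where "sz g = card (gverts g) - 1"
definition surA :: "gadget \<Rightarrow> nat" where "surA g = sz g - 3 * length (selA g)"

lemma D12_cases: "g \<in> D1 \<union> D2 \<Longrightarrow> g = Pend 3 1 \<or> g = Pend 3 2 \<or> g = Pend 3 3 \<or> g = Pend 4 1 \<or> g = Pend 4 2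
  \<or> g = Pend 4 3 \<or> g = Pend 5 1 \<or> g = Pend 5 2 \<or> g = Pend 5 3 \<or> g = Cyc 3 \<or> g = Cyc 4 \<or> g = Cyc 5"
  unfolding D1_def D2_def by auto

lemma ZO_cases: "g \<in> Zs \<union> Os \<Longrightarrow> g = Pend 3 1 \<or> g = Pend 4 3 \<or> g = Pend 5 2 \<or> g = Cyc 4 \<or> g = Pend 3 2 \<or> g = Pend 5 3 \<or> g = Pend 4 1 \<or> g = Cyc 5"
  unfolding Zs_def Os_def by auto

lemmas vsimps = lessThan_nat_numeral lessThan_Suc lessThan_0 insert_Diff_if

lemma wf_gadget: "g \<in> D1 \<union> D2 \<Longrightarrow> gattach g \<in> gverts g \<and> (\<forall>j k. gedge g j k \<longrightarrow> j \<in> gverts g \<and> k \<in> gverts g) \<and> (\<forall>j. \<not> gedge g j j)"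
  apply (drule D12_cases)
  apply (elim disjE)
  apply (auto simp add: gedge_Cyc gedge_Pend)
  done

lemma selA_ok: "g \<in> D1 \<union> D2 \<Longrightarrow> distinct (selA g) \<and> set (selA g) \<subseteq> gverts g - {gattach g} \<and> 3 * length (selA g) \<le> sz g
   \<and> (\<forall>j\<in>gverts g - {gattach g}. ldom g (selA g) True False j)"
  apply (drule D12_cases)
  apply (elim disjE)
  apply (simp_all add: selA_def sz_def vsimps evs)
  done

lemma selB_ok: "g \<in> Zs \<union> Os \<Longrightarrow> g \<noteq> Pend 4 1 \<Longrightarrow> g \<noteq> Cyc 5 \<Longrightarrow> distinct (selB g) \<and> set (selB g) \<subseteq> gverts g - {gattach g} \<and> 3 * length (selB g) \<le> sz g
   \<and> (\<forall>j\<in>gverts g - {gattach g}. ldom g (selB g) False False j)"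
  apply (drule ZO_cases)
  apply (elim disjE)
  apply (simp_all add: selB_def sz_def vsimps evs)
  done

lemma selC_ok: "g \<in> Zs \<union> Os \<Longrightarrow> distinct (selC g) \<and> set (selC g) \<subseteq> gverts g - {gattach g} \<and> 3 * length (selC g) \<le> sz g
   \<and> (\<forall>j\<in>gverts g - {gattach g}. ldom g (selC g) False (g \<in> {Pend 4 1, Cyc 5, Cyc 4}) j)"
  apply (drule ZO_cases)
  apply (elim disjE)
  apply (simp_all add: selC_def selB_def sz_def vsimps evs)
  done

lemma selC_nbr: "g \<in> Zs \<Longrightarrow> \<exists>k\<in>set (selC g). gedge g (gattach g) k"
  unfolding Zs_def by (auto simp: selC_def selB_def evs)

lemma selB_nbr: "g \<in> {Pend 3 1, Pend 4 3, Pend 5 2} \<Longrightarrow> \<exists>k\<in>set (selB g). gedge g (gattach g) k"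
  by (auto simp: selB_def evs)

lemma selB_d2: "g \<in> {Cyc 4, Pend 3 2, Pend 5 3} \<Longrightarrow> \<exists>k\<in>set (selB g). ld2 g (gattach g) k"
  by (auto simp: selB_def evs)

lemma surA_facts: "g \<in> D1 \<union> D2 \<Longrightarrow> (g \<notin> Zs \<union> Os \<longrightarrow> 2 \<le> surA g) \<and> (g \<in> Os \<longrightarrow> 1 \<le> surA g) \<and> (g \<in> Zs \<longrightarrow> surA g = 0)"
  apply (drule D12_cases)
  apply (elim disjE)
  apply (simp_all add: surA_def sz_def selA_def Zs_def Os_def vsimps)
  done


definition wfg :: "gadget \<Rightarrow> bool" where
  "wfg g \<longleftrightarrow> gattach g \<in> gverts g \<and> (\<forall>j k. gedge g j k \<longrightarrow> j \<in> gverts g \<and> k \<in> gverts g) \<and> (\<forall>j. \<not> gedge g j j)"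

lemma finite_gverts[simp]: "finite (gverts g)" by (cases g) auto

lemma emb_Some_iff: "(Some (i',k) = emb gs i j) \<longleftrightarrow> j \<noteq> gattach (gs!i) \<and> i' = i \<and> k = j"
  by (auto simp: emb_def)
lemma emb_None_iff: "(None = emb gs i j) \<longleftrightarrow> j = gattach (gs!i)"
  by (auto simp: emb_def)

lemma famV_iff: "x \<in> famV gs \<longleftrightarrow> x = None \<or> (\<exists>i j. x = Some (i,j) \<and> i < length gs \<and> j \<in> gverts (gs!i) \<and> j \<noteq> gattach (gs!i))"
  unfolding famV_def emb_def by (cases x) force+

lemma famE_SS: "famE gs (Some (i,j)) (Some (i',k)) \<longleftrightarrow> i' = i \<and> i < length gs \<and> j \<in> gverts (gs!i) \<and> k \<in> gverts (gs!i)
   \<and> j \<noteq> gattach (gs!i) \<and> k \<noteq> gattach (gs!i) \<and> gedge (gs!i) j k"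
  unfolding famE_def emb_Some_iff by auto

lemma famE_SN: "wfg (gs!i) \<Longrightarrow> famE gs (Some (i,j)) None \<longleftrightarrow> i < length gs \<and> j \<in> gverts (gs!i)
   \<and> j \<noteq> gattach (gs!i) \<and> gedge (gs!i) j (gattach (gs!i))"
  unfolding famE_def emb_Some_iff emb_None_iff wfg_def by auto

lemma famE_NS: "wfg (gs!i) \<Longrightarrow> famE gs None (Some (i,k)) \<longleftrightarrow> i < length gs \<and> k \<in> gverts (gs!i)
   \<and> k \<noteq> gattach (gs!i) \<and> gedge (gs!i) (gattach (gs!i)) k"
  unfolding famE_def emb_Some_iff emb_None_iff wfg_def by auto

lemma d2_loc:
  assumes wf: "wfg (gs!i)" and i: "i < length gs" and j: "j \<in> gverts (gs!i)" "j \<noteq> gattach (gs!i)"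
    and k: "k \<in> gverts (gs!i)" "k \<noteq> gattach (gs!i)" and l: "ld2 (gs!i) j k"
  shows "dist2 (famV gs) (famE gs) (Some (i,j)) (Some (i,k))"
proof -
  from l obtain z where z: "z \<in> gverts (gs!i)" "gedge (gs!i) j z" "gedge (gs!i) z k" and jk: "j \<noteq> k" "\<not> gedge (gs!i) j k"
    unfolding ld2_def by blast
  show ?thesis
  proof (cases "z = gattach (gs!i)")
    case True
    then show ?thesis unfolding dist2_def using wf i j k z jk
      by (intro conjI bexI[of _ None]) (auto simp: famE_SS famE_SN famE_NS famV_iff)
  next
    case False
    then show ?thesis unfolding dist2_def using wf i j k z jk
      by (intro conjI bexI[of _ "Some (i,z)"]) (auto simp: famE_SS famV_iff)
  qed
qed

lemma d2_toNone:
  assumes wf: "wfg (gs!i)" and i: "i < length gs" and j: "j \<in> gverts (gs!i)" "j \<noteq> gattach (gs!i)"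
    and l: "ld2 (gs!i) j (gattach (gs!i))"
  shows "dist2 (famV gs) (famE gs) (Some (i,j)) None"
proof -
  from l obtain z where z: "z \<in> gverts (gs!i)" "gedge (gs!i) j z" "gedge (gs!i) z (gattach (gs!i))"
    and jk: "\<not> gedge (gs!i) j (gattach (gs!i))"
    unfolding ld2_def by blast
  have "z \<noteq> gattach (gs!i)" using z wf unfolding wfg_def by auto
  then show ?thesis unfolding dist2_def using wf i j z jk
    by (intro conjI bexI[of _ "Some (i,z)"]) (auto simp: famE_SS famE_SN famV_iff)
qed

lemma d2_fromNone:
  assumes wf: "wfg (gs!i)" and i: "i < length gs" and k: "k \<in> gverts (gs!i)" "k \<noteq> gattach (gs!i)"
    and l: "ld2 (gs!i) (gattach (gs!i)) k"
  shows "dist2 (famV gs) (famE gs) None (Some (i,k))"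
proof -
  from l obtain z where z: "z \<in> gverts (gs!i)" "gedge (gs!i) (gattach (gs!i)) z" "gedge (gs!i) z k"
    and jk: "\<not> gedge (gs!i) (gattach (gs!i)) k"
    unfolding ld2_def by blast
  have "z \<noteq> gattach (gs!i)" using z wf unfolding wfg_def by auto
  then show ?thesis unfolding dist2_def using wf i k z jk
    by (intro conjI bexI[of _ "Some (i,z)"]) (auto simp: famE_SS famE_NS famV_iff)
qed

lemma d2_cross:
  assumes wf: "wfg (gs!i)" "wfg (gs!i')" and i: "i < length gs" "i' < length gs" "i \<noteq> i'"
    and j: "j \<in> gverts (gs!i)" "j \<noteq> gattach (gs!i)" and k: "k \<in> gverts (gs!i')" "k \<noteq> gattach (gs!i')"
    and e: "gedge (gs!i) j (gattach (gs!i))" "gedge (gs!i') (gattach (gs!i')) k"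
  shows "dist2 (famV gs) (famE gs) (Some (i,j)) (Some (i',k))"
  unfolding dist2_def using assms
  by (intro conjI bexI[of _ None]) (auto simp: famE_SS famE_SN famE_NS famV_iff)


definition Ssel :: "gadget list \<Rightarrow> (gadget \<Rightarrow> nat list) \<Rightarrow> bool \<Rightarrow> (nat \<times> nat) option set" where
  "Ssel gs sel vin = (if vin then {None} else {}) \<union> {Some (i,k) | i k. i < length gs \<and> k \<in> set (sel (gs!i))}"

lemma famV_alt: "famV gs = insert None ((\<lambda>(i,j). Some (i,j)) ` (SIGMA i:{..<length gs}. gverts (gs!i) - {gattach (gs!i)}))"
  by (auto simp: famV_iff)

lemma Ssel_alt: "Ssel gs sel vin = (if vin then {None} else {}) \<union> ((\<lambda>(i,j). Some (i,j)) ` (SIGMA i:{..<length gs}. set (sel (gs!i))))"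
  unfolding Ssel_def by auto

lemma finite_famV: "finite (famV gs)"
  unfolding famV_alt by auto

lemma lift:
  assumes wf: "\<forall>g\<in>set gs. wfg g"
    and selok: "\<forall>i<length gs. set (sel (gs!i)) \<subseteq> gverts (gs!i) - {gattach (gs!i)} \<and> distinct (sel (gs!i))"
    and loc: "\<forall>i<length gs. \<forall>j\<in>gverts (gs!i) - {gattach (gs!i)}. ldom (gs!i) (sel (gs!i)) vin (one i) j"
    and oneok: "\<forall>i<length gs. one i \<longrightarrow> (\<exists>i'<length gs. i' \<noteq> i \<and> (\<exists>k\<in>set (sel (gs!i')). gedge (gs!i') (gattach (gs!i')) k))"
    and vdom: "vin \<or> (\<exists>i<length gs. \<exists>k\<in>set (sel (gs!i)). gedge (gs!i) (gattach (gs!i)) k)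
       \<or> (\<exists>i1 k1 i2 k2. i1 < length gs \<and> i2 < length gs \<and> (i1,k1) \<noteq> (i2,k2) \<and> k1 \<in> set (sel (gs!i1)) \<and> k2 \<in> set (sel (gs!i2))
            \<and> ld2 (gs!i1) (gattach (gs!i1)) k1 \<and> ld2 (gs!i2) (gattach (gs!i2)) k2)"
  shows "disj_dom (famV gs) (famE gs) (Ssel gs sel vin)"
proof -
  let ?V = "famV gs" and ?E = "famE gs" and ?S = "Ssel gs sel vin"
  have wfi: "wfg (gs!i)" if "i < length gs" for i using wf that by auto
  have Ssub: "?S \<subseteq> ?V"
  proof
    fix x assume "x \<in> ?S"
    then have "x = None \<or> (\<exists>i k. x = Some (i,k) \<and> i < length gs \<and> k \<in> set (sel (gs!i)))"
      by (auto simp: Ssel_def split: if_splits)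
    then show "x \<in> ?V"
    proof
      assume "\<exists>i k. x = Some (i,k) \<and> i < length gs \<and> k \<in> set (sel (gs!i))"
      then obtain i k where ik: "x = Some (i,k)" "i < length gs" "k \<in> set (sel (gs!i))" by blast
      then have "k \<in> gverts (gs!i) - {gattach (gs!i)}" using selok by blast
      then show ?thesis using ik unfolding famV_iff by blast
    qed (simp add: famV_iff)
  qed
  have finS: "finite ?S" using Ssub finite_famV finite_subset by blast
  have SomeS: "Some (i,k) \<in> ?S" if "i < length gs" "k \<in> set (sel (gs!i))" for i k
    using that by (auto simp: Ssel_def)
  have selv: "k \<in> gverts (gs!i) \<and> k \<noteq> gattach (gs!i)" if "i < length gs" "k \<in> set (sel (gs!i))" for i k
    using that selok by blast
  have card2: "2 \<le> card {w\<in>?S. dist2 ?V ?E u w}" if "T \<subseteq> {w\<in>?S. dist2 ?V ?E u w}" "2 \<le> card T" for u T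
  proof -
    have "finite {w\<in>?S. dist2 ?V ?E u w}" using finS by simp
    then have "card T \<le> card {w\<in>?S. dist2 ?V ?E u w}" using that(1) by (rule card_mono)
    then show ?thesis using that(2) by simp
  qed
  have "\<forall>u\<in>?V - ?S. (\<exists>w\<in>?S. ?E u w) \<or> 2 \<le> card {w\<in>?S. dist2 ?V ?E u w}"
  proof
    fix u assume u: "u \<in> ?V - ?S"
    show "(\<exists>w\<in>?S. ?E u w) \<or> 2 \<le> card {w\<in>?S. dist2 ?V ?E u w}"
    proof (cases u)
      case None
      then have nv: "\<not> vin" using u by (auto simp: Ssel_def)
      show ?thesis
      proof (cases "\<exists>i<length gs. \<exists>k\<in>set (sel (gs!i)). gedge (gs!i) (gattach (gs!i)) k")
        case True
        then obtain i k where ik: "i < length gs" "k \<in> set (sel (gs!i))" "gedge (gs!i) (gattach (gs!i)) k" by blast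
        have "?E u (Some (i,k))" using None ik selv[OF ik(1,2)] by (simp add: famE_NS wfi)
        then show ?thesis using SomeS[OF ik(1,2)] by blast
      next
        case False
        then obtain i1 k1 i2 k2 where w: "i1 < length gs" "i2 < length gs" "(i1,k1) \<noteq> (i2,k2)" "k1 \<in> set (sel (gs!i1))"
          "k2 \<in> set (sel (gs!i2))" "ld2 (gs!i1) (gattach (gs!i1)) k1" "ld2 (gs!i2) (gattach (gs!i2)) k2"
          using vdom nv by blast
        have "{Some (i1,k1), Some (i2,k2)} \<subseteq> {w\<in>?S. dist2 ?V ?E u w}"
          using w None selv[OF w(1,4)] selv[OF w(2,5)] SomeS[OF w(1,4)] SomeS[OF w(2,5)]
          by (auto intro!: d2_fromNone wfi)
        moreover have "card {Some (i1,k1), Some (i2,k2)} = 2" using w(3) by auto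
        ultimately show ?thesis using card2[of "{Some (i1,k1), Some (i2,k2)}" u] by simp
      qed
    next
      case (Some p)
      then obtain i j where p: "u = Some (i,j)" by (cases p) auto
      have i: "i < length gs" and j: "j \<in> gverts (gs!i)" "j \<noteq> gattach (gs!i)"
        using u p by (auto simp: famV_iff)
      let ?g = "gs!i" and ?L = "sel (gs!i)"
      have ld: "ldom ?g ?L vin (one i) j" using loc i j by blast
      have jL: "j \<notin> set ?L" using u p SomeS[OF i] by blast
      show ?thesis
      proof (cases "\<exists>k\<in>set ?L. gedge ?g j k")
        case True
        then obtain k where k: "k \<in> set ?L" "gedge ?g j k" by blast
        have "?E u (Some (i,k))" using p i j k selv[OF i k(1)] by (simp add: famE_SS)
        then show ?thesis using SomeS[OF i k(1)] by blast
      next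
        case nk: False
        show ?thesis
        proof (cases "vin \<and> gedge ?g j (gattach ?g)")
          case True
          then have "?E u None" "None \<in> ?S" using p i j by (auto simp: famE_SN wfi Ssel_def)
          then show ?thesis by blast
        next
          case nv: False
          have cnt: "2 \<le> length (filter (ld2 ?g j) ?L) + (if vin \<and> ld2 ?g j (gattach ?g) then 1 else 0)
              + (if one i \<and> gedge ?g j (gattach ?g) then 1 else 0)"
            using ld jL nk nv unfolding ldom_def by auto
          define A where "A = (\<lambda>k. Some (i,k)) ` set (filter (ld2 ?g j) ?L)"
          define B where "B = (if vin \<and> ld2 ?g j (gattach ?g) then {None} else ({} :: (nat\<times>nat) option set))"
          obtain C where C: "C \<subseteq> {w\<in>?S. dist2 ?V ?E u w}" "C \<inter> (A \<union> B) = {}"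
            "card C = (if one i \<and> gedge ?g j (gattach ?g) then 1 else 0)"
          proof (cases "one i \<and> gedge ?g j (gattach ?g)")
            case True
            then obtain i' k where ik: "i' < length gs" "i' \<noteq> i" "k \<in> set (sel (gs!i'))" "gedge (gs!i') (gattach (gs!i')) k"
              using oneok i by blast
            have kv: "k \<in> gverts (gs!i')" "k \<noteq> gattach (gs!i')" using selv[OF ik(1,3)] by auto
            have "dist2 ?V ?E u (Some (i',k))" unfolding p
              using True by (intro d2_cross[OF wfi[OF i] wfi[OF ik(1)] i ik(1) not_sym[OF ik(2)] j(1) j(2) kv(1) kv(2) _ ik(4)]) auto
            show ?thesis
            proof (rule that[of "{Some (i',k)}"])
              show "{Some (i',k)} \<subseteq> {w\<in>?S. dist2 ?V ?E u w}" using SomeS[OF ik(1,3)] \<open>dist2 ?V ?E u (Some (i',k))\<close> by blast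
              show "{Some (i',k)} \<inter> (A \<union> B) = {}" unfolding A_def B_def using ik(2) by auto
              show "card {Some (i',k)} = (if one i \<and> gedge ?g j (gattach ?g) then 1 else 0)" using True by simp
            qed
          next
            case False
            then show ?thesis using that[of "{}"] by auto
          qed
          have Asub: "A \<subseteq> {w\<in>?S. dist2 ?V ?E u w}"
          proof
            fix w assume "w \<in> A"
            then obtain k where k: "k \<in> set ?L" "ld2 ?g j k" "w = Some (i,k)" unfolding A_def by auto
            have kv: "k \<in> gverts ?g" "k \<noteq> gattach ?g" using selv[OF i k(1)] by auto
            have "dist2 ?V ?E (Some (i,j)) (Some (i,k))"
              by (rule d2_loc[OF wfi[OF i] i j(1) j(2) kv(1) kv(2) k(2)])
            then show "w \<in> {w\<in>?S. dist2 ?V ?E u w}" using SomeS[OF i k(1)] k(3) p by simp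
          qed
          have Bsub: "B \<subseteq> {w\<in>?S. dist2 ?V ?E u w}"
          proof (cases "vin \<and> ld2 ?g j (gattach ?g)")
            case True
            have "dist2 ?V ?E (Some (i,j)) None"
              using True by (intro d2_toNone[OF wfi[OF i] i j(1) j(2)]) simp
            moreover have "None \<in> ?S" using True by (simp add: Ssel_def)
            ultimately show ?thesis unfolding B_def using True p by simp
          next
            case False
            then show ?thesis unfolding B_def by auto
          qed
          have dL: "distinct ?L" using selok i by blast
          have cf: "card (set (filter (ld2 ?g j) ?L)) = length (filter (ld2 ?g j) ?L)"
            using dL by (intro distinct_card) simp
          have cA: "card A = length (filter (ld2 ?g j) ?L)"
            unfolding A_def using cf by (subst card_image) (auto simp: inj_on_def)
          have cB: "card B = (if vin \<and> ld2 ?g j (gattach ?g) then 1 else 0)" unfolding B_def by auto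
          have AB: "A \<inter> B = {}" unfolding A_def B_def by auto
          have finC: "finite C" by (rule finite_subset[OF C(1)]) (use finS in simp)
          have finAB: "finite A" "finite B" "finite C" using finC unfolding A_def B_def by auto
          have "card (A \<union> B \<union> C) = card A + card B + card C"
            using AB C(2) finAB by (simp add: card_Un_disjoint Int_Un_distrib2 Int_commute)
          then have "2 \<le> card (A \<union> B \<union> C)" using cnt cA cB C(3) by simp
          moreover have "A \<union> B \<union> C \<subseteq> {w\<in>?S. dist2 ?V ?E u w}" using Asub Bsub C(1) by blast
          ultimately show ?thesis using card2 by blast
        qed
      qed
    qed
  qed
  then show ?thesis unfolding disj_dom_def using Ssub by blast
qed


lemma card_famV:
  assumes "\<forall>g\<in>set gs. wfg g"
  shows "card (famV gs) = 1 + (\<Sum>i<length gs. sz (gs!i))"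
proof -
  let ?X = "SIGMA i:{..<length gs}. gverts (gs!i) - {gattach (gs!i)}"
  have e: "famV gs = insert None (Some ` ?X)" using famV_alt[of gs] by simp
  have fX: "finite ?X" by auto
  have "card (famV gs) = Suc (card (Some ` ?X))" unfolding e
    by (rule card_insert_disjoint) (use fX in auto)
  also have "card (Some ` ?X) = card ?X" by (rule card_image) simp
  also have "card ?X = (\<Sum>i<length gs. card (gverts (gs!i) - {gattach (gs!i)}))"
    by (rule card_SigmaI) auto
  also have "\<dots> = (\<Sum>i<length gs. sz (gs!i))"
  proof (rule sum.cong)
    fix i assume "i \<in> {..<length gs}"
    then have "wfg (gs!i)" using assms by auto
    then show "card (gverts (gs!i) - {gattach (gs!i)}) = sz (gs!i)"
      unfolding sz_def wfg_def by simp
  qed simp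
  finally show ?thesis by simp
qed

lemma card_Ssel:
  assumes "\<forall>i<length gs. distinct (sel (gs!i))"
  shows "card (Ssel gs sel vin) = (if vin then 1 else 0) + (\<Sum>i<length gs. length (sel (gs!i)))"
proof -
  let ?X = "SIGMA i:{..<length gs}. set (sel (gs!i))"
  have e: "Ssel gs sel vin = (if vin then {None} else {}) \<union> Some ` ?X" using Ssel_alt[of gs sel vin] by simp
  have fX: "finite ?X" by auto
  have c1: "card (Some ` ?X) = card ?X" by (rule card_image) simp
  have c2: "card ?X = (\<Sum>i<length gs. card (set (sel (gs!i))))" by (rule card_SigmaI) auto
  have c3: "(\<Sum>i<length gs. card (set (sel (gs!i)))) = (\<Sum>i<length gs. length (sel (gs!i)))"
    using assms by (intro sum.cong) (auto simp: distinct_card)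
  show ?thesis
  proof (cases vin)
    case True
    have "card (Ssel gs sel vin) = Suc (card (Some ` ?X))" unfolding e using True
      using fX by simp
    then show ?thesis using True c1 c2 c3 by simp
  next
    case False
    then show ?thesis unfolding e using c1 c2 c3 by simp
  qed
qed



lemma wfg_D12: "g \<in> D1 \<union> D2 \<Longrightarrow> wfg g" using wf_gadget unfolding wfg_def by blast

lemma len2: "length gs = 2 \<Longrightarrow> gs = [gs!0, gs!1]"
  by (cases gs; cases "tl gs") (auto simp: numeral_2_eq_2)

lemma main_fam:
  assumes len: "2 \<le> length gs" and sub: "set gs \<subseteq> D1 \<union> D2"
    and bad: "gs \<notin> {[Cyc 4, Pend 4 1], [Pend 4 1, Cyc 4], [Cyc 4, Cyc 5], [Cyc 5, Cyc 4]}"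
  shows "\<exists>S. disj_dom (famV gs) (famE gs) S \<and> 3 * card S \<le> card (famV gs)"
proof -
  have gD: "gs!i \<in> D1 \<union> D2" if "i < length gs" for i using sub nth_mem that by blast
  have wf: "\<forall>g\<in>set gs. wfg g" using sub wfg_D12 by blast
  have cV: "card (famV gs) = 1 + (\<Sum>i<length gs. sz (gs!i))" by (rule card_famV[OF wf])
  show ?thesis
  proof (cases "2 \<le> (\<Sum>i<length gs. surA (gs!i))")
    case True
    let ?S = "Ssel gs selA True"
    have A: "distinct (selA (gs!i)) \<and> set (selA (gs!i)) \<subseteq> gverts (gs!i) - {gattach (gs!i)} \<and> 3 * length (selA (gs!i)) \<le> sz (gs!i)
      \<and> (\<forall>j\<in>gverts (gs!i) - {gattach (gs!i)}. ldom (gs!i) (selA (gs!i)) True False j)" if "i < length gs" for i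
      using selA_ok gD that by blast
    have dd: "disj_dom (famV gs) (famE gs) ?S"
      by (rule lift[where one = "\<lambda>_. False"]) (use wf A in auto)
    have cS: "card ?S = 1 + (\<Sum>i<length gs. length (selA (gs!i)))" using card_Ssel[of gs selA True] A by simp
    have "(\<Sum>i<length gs. sz (gs!i)) = (\<Sum>i<length gs. surA (gs!i) + 3 * length (selA (gs!i)))"
      by (rule sum.cong) (use A in \<open>auto simp: surA_def\<close>)
    also have "\<dots> = (\<Sum>i<length gs. surA (gs!i)) + 3 * (\<Sum>i<length gs. length (selA (gs!i)))"
      by (simp add: sum.distrib sum_distrib_left)
    finally have "3 * card ?S \<le> card (famV gs)" using cS cV True by simp
    then show ?thesis using dd by blast
  next
    case False
    let ?F = "\<lambda>i. surA (gs!i)"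
    have le: "?F i1 + ?F i2 \<le> (\<Sum>i<length gs. ?F i)" if "i1 < length gs" "i2 < length gs" "i1 \<noteq> i2" for i1 i2
    proof -
      have "(\<Sum>i\<in>{i1,i2}. ?F i) \<le> (\<Sum>i<length gs. ?F i)" by (rule sum_mono2) (use that in auto)
      then show ?thesis using that by simp
    qed
    have le1: "?F i \<le> (\<Sum>i<length gs. ?F i)" if "i < length gs" for i
      by (rule member_le_sum) (use that in auto)
    have ZO: "gs!i \<in> Zs \<union> Os" if "i < length gs" for i
      using surA_facts[OF gD[OF that]] le1[OF that] False by auto
    have oneO: "i1 = i2" if "i1 < length gs" "i2 < length gs" "gs!i1 \<in> Os" "gs!i2 \<in> Os" for i1 i2
    proof (rule ccontr)
      assume "i1 \<noteq> i2"
      then have "?F i1 + ?F i2 \<le> (\<Sum>i<length gs. ?F i)" using le that by blast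
      moreover have "1 \<le> ?F i1" "1 \<le> ?F i2" using surA_facts[OF gD] that by auto
      ultimately show False using False by simp
    qed
    have cnt: "3 * card (Ssel gs sel False) \<le> card (famV gs)"
      if "\<And>i. i < length gs \<Longrightarrow> distinct (sel (gs!i)) \<and> 3 * length (sel (gs!i)) \<le> sz (gs!i)" for sel
    proof -
      have "card (Ssel gs sel False) = (\<Sum>i<length gs. length (sel (gs!i)))"
        using card_Ssel[of gs sel False] that by simp
      moreover have "3 * (\<Sum>i<length gs. length (sel (gs!i))) \<le> (\<Sum>i<length gs. sz (gs!i))"
        unfolding sum_distrib_left by (rule sum_mono) (use that in auto)
      ultimately show ?thesis using cV by simp
    qed
    show ?thesis
    proof (cases "\<exists>i0<length gs. gs!i0 \<in> {Pend 4 1, Cyc 5}")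
      case True
      then obtain i0 where i0: "i0 < length gs" "gs!i0 \<in> {Pend 4 1, Cyc 5}" by blast
      have i0O: "gs!i0 \<in> Os" using i0 by (auto simp: Os_def)
      have othZ: "gs!i \<in> Zs" if "i < length gs" "i \<noteq> i0" for i
        using ZO[OF that(1)] oneO[OF that(1) i0(1) _ i0O] that by auto
      let ?one = "\<lambda>i. gs!i \<in> {Pend 4 1, Cyc 5, Cyc 4}"
      have C: "distinct (selC (gs!i)) \<and> set (selC (gs!i)) \<subseteq> gverts (gs!i) - {gattach (gs!i)} \<and> 3 * length (selC (gs!i)) \<le> sz (gs!i)
        \<and> (\<forall>j\<in>gverts (gs!i) - {gattach (gs!i)}. ldom (gs!i) (selC (gs!i)) False (?one i) j)" if "i < length gs" for i
        using selC_ok ZO that by blast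
      have nbr: "\<exists>k\<in>set (selC (gs!i)). gedge (gs!i) (gattach (gs!i)) k" if "i < length gs" "i \<noteq> i0" for i
        using selC_nbr othZ that by blast
      define i1 where "i1 = (if i0 = 0 then 1 else (0::nat))"
      have i1: "i1 < length gs" "i1 \<noteq> i0" using len unfolding i1_def by auto
      have oneok: "\<forall>i<length gs. ?one i \<longrightarrow> (\<exists>i'<length gs. i' \<noteq> i \<and> (\<exists>k\<in>set (selC (gs!i')). gedge (gs!i') (gattach (gs!i')) k))"
      proof (intro allI impI)
        fix i assume i: "i < length gs" "?one i"
        show "\<exists>i'<length gs. i' \<noteq> i \<and> (\<exists>k\<in>set (selC (gs!i')). gedge (gs!i') (gattach (gs!i')) k)"
        proof (cases "i = i0")
          case True
          then show ?thesis using i1 nbr[OF i1] by blast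
        next
          case ne: False
          have "gs!i \<in> Zs" using othZ i ne by blast
          then have c4: "gs!i = Cyc 4" using i(2) by (auto simp: Zs_def)
          show ?thesis
          proof (cases "length gs = 2")
            case True
            then have "gs = [gs!0, gs!1]" by (rule len2)
            moreover have "(i = 0 \<and> i0 = 1) \<or> (i = 1 \<and> i0 = 0)" using True i(1) i0(1) ne by auto
            ultimately show ?thesis using bad c4 i0(2) by auto
          next
            case False
            then have l3: "3 \<le> length gs" using len by simp
            define i' where "i' = (if 0 \<noteq> i \<and> 0 \<noteq> i0 then 0 else if 1 \<noteq> i \<and> 1 \<noteq> i0 then 1 else (2::nat))"
            have "i' < length gs" "i' \<noteq> i" "i' \<noteq> i0" using l3 ne unfolding i'_def by auto
            then show ?thesis using nbr by blast
          qed
        qed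
      qed
      have dd: "disj_dom (famV gs) (famE gs) (Ssel gs selC False)"
        by (rule lift[where one = ?one]) (use wf C oneok nbr[OF i1] i1 in auto)
      moreover have "3 * card (Ssel gs selC False) \<le> card (famV gs)" by (rule cnt) (use C in auto)
      ultimately show ?thesis by blast
    next
      case noO: False
      have B: "distinct (selB (gs!i)) \<and> set (selB (gs!i)) \<subseteq> gverts (gs!i) - {gattach (gs!i)} \<and> 3 * length (selB (gs!i)) \<le> sz (gs!i)
        \<and> (\<forall>j\<in>gverts (gs!i) - {gattach (gs!i)}. ldom (gs!i) (selB (gs!i)) False False j)" if "i < length gs" for i
        using selB_ok ZO noO that by blast
      have vdom: "(\<exists>i<length gs. \<exists>k\<in>set (selB (gs!i)). gedge (gs!i) (gattach (gs!i)) k)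
       \<or> (\<exists>i1 k1 i2 k2. i1 < length gs \<and> i2 < length gs \<and> (i1,k1) \<noteq> (i2,k2) \<and> k1 \<in> set (selB (gs!i1)) \<and> k2 \<in> set (selB (gs!i2))
            \<and> ld2 (gs!i1) (gattach (gs!i1)) k1 \<and> ld2 (gs!i2) (gattach (gs!i2)) k2)"
      proof (cases "\<exists>i<length gs. gs!i \<in> {Pend 3 1, Pend 4 3, Pend 5 2}")
        case True
        then show ?thesis using selB_nbr by blast
      next
        case False
        have H: "gs!i \<in> {Cyc 4, Pend 3 2, Pend 5 3}" if "i < length gs" for i
          using ZO[OF that] noO False that by (auto simp: Zs_def Os_def)
        have "gs!0 \<in> {Cyc 4, Pend 3 2, Pend 5 3}" "gs!1 \<in> {Cyc 4, Pend 3 2, Pend 5 3}"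
        proof -
          have "0 < length gs" "1 < length gs" using len by auto
          then show "gs!0 \<in> {Cyc 4, Pend 3 2, Pend 5 3}" "gs!1 \<in> {Cyc 4, Pend 3 2, Pend 5 3}" using H by blast+
        qed
        then obtain k1 k2 where "k1 \<in> set (selB (gs!0))" "ld2 (gs!0) (gattach (gs!0)) k1"
          "k2 \<in> set (selB (gs!1))" "ld2 (gs!1) (gattach (gs!1)) k2" using selB_d2 by meson
        then show ?thesis using len by (intro disjI2 exI[of _ 0] exI[of _ k1] exI[of _ 1] exI[of _ k2]) auto
      qed
      have dd: "disj_dom (famV gs) (famE gs) (Ssel gs selB False)"
        by (rule lift[where one = "\<lambda>_. False"]) (use wf B vdom in auto)
      moreover have "3 * card (Ssel gs selB False) \<le> card (famV gs)" by (rule cnt) (use B in auto)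
      ultimately show ?thesis by blast
    qed
  qed
qed


lemma iso_trans:
  assumes "graph_iso A EA B EB" "graph_iso B EB C EC"
  shows "graph_iso A EA C EC"
proof -
  obtain f where f: "bij_betw f A B" "\<forall>x\<in>A. \<forall>y\<in>A. EA x y \<longleftrightarrow> EB (f x) (f y)" using assms(1) unfolding graph_iso_def by blast
  obtain g where g: "bij_betw g B C" "\<forall>x\<in>B. \<forall>y\<in>B. EB x y \<longleftrightarrow> EC (g x) (g y)" using assms(2) unfolding graph_iso_def by blast
  have "bij_betw (g \<circ> f) A C" using f(1) g(1) by (rule bij_betw_trans)
  moreover have "\<forall>x\<in>A. \<forall>y\<in>A. EA x y \<longleftrightarrow> EC ((g \<circ> f) x) ((g \<circ> f) y)"
    using f g bij_betw_apply[OF f(1)] by simp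
  ultimately show ?thesis unfolding graph_iso_def by blast
qed

lemma famE_NN: "\<forall>g\<in>set gs. wfg g \<Longrightarrow> \<not> famE gs None None"
  unfolding famE_def emb_None_iff wfg_def by auto

lemma iso_swap:
  assumes wa: "wfg a" and wb: "wfg b"
  shows "graph_iso (famV [a,b]) (famE [a,b]) (famV [b,a]) (famE [b,a])"
proof -
  define \<sigma> :: "(nat \<times> nat) option \<Rightarrow> (nat \<times> nat) option" where "\<sigma> = map_option (\<lambda>(i,j). (1 - i, j))"
  have sw: "[b,a] ! (1 - i) = [a,b] ! i" "[a,b] ! (1 - i) = [b,a] ! i" if "i < 2" for i
    using that by (auto simp: less_2_cases_iff)
  have inv: "\<sigma> (\<sigma> x) = x" if "x \<in> famV [a,b] \<or> x \<in> famV [b,a]" for x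
    using that by (auto simp: famV_iff \<sigma>_def)
  have img1: "\<sigma> x \<in> famV [b,a]" if "x \<in> famV [a,b]" for x
    using that sw by (auto simp: famV_iff \<sigma>_def)
  have img2: "\<sigma> x \<in> famV [a,b]" if "x \<in> famV [b,a]" for x
    using that sw by (auto simp: famV_iff \<sigma>_def)
  have bij: "bij_betw \<sigma> (famV [a,b]) (famV [b,a])"
    by (rule bij_betw_byWitness[where f' = \<sigma>]) (use inv img1 img2 in auto)
  have wfs: "\<forall>g\<in>set [a,b]. wfg g" "\<forall>g\<in>set [b,a]. wfg g" using wa wb by auto
  have wfi: "wfg ([a,b]!i)" "wfg ([b,a]!i)" if "i < 2" for i using that wa wb by (auto simp: less_2_cases_iff)
  have edge: "famE [a,b] x y \<longleftrightarrow> famE [b,a] (\<sigma> x) (\<sigma> y)" if "x \<in> famV [a,b]" "y \<in> famV [a,b]" for x y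
  proof -
    have cx: "x = None \<or> (\<exists>i j. x = Some (i,j) \<and> i < 2)" using that(1) by (auto simp: famV_iff)
    have cy: "y = None \<or> (\<exists>i j. y = Some (i,j) \<and> i < 2)" using that(2) by (auto simp: famV_iff)
    show ?thesis
      using cx cy
      apply (elim disjE exE conjE)
      apply (simp_all add: \<sigma>_def famE_NN[OF wfs(1)] famE_NN[OF wfs(2)] famE_SS famE_SN famE_NS wfi)
      apply (auto simp: less_2_cases_iff)
      done
  qed
  show ?thesis unfolding graph_iso_def using bij edge by blast
qed

lemma iso_transfer_dom:
  assumes iso: "graph_iso V E V' E'" and fin: "finite V'" and dd: "disj_dom V' E' S'"
  shows "\<exists>S. disj_dom V E S \<and> card S = card S'"
proof -
  obtain f where f: "bij_betw f V V'" and fe: "\<forall>x\<in>V. \<forall>y\<in>V. E x y \<longleftrightarrow> E' (f x) (f y)"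
    using iso unfolding graph_iso_def by blast
  have inj: "inj_on f V" using f by (rule bij_betw_imp_inj_on)
  have fV: "f ` V = V'" using f by (rule bij_betw_imp_surj_on)
  define S where "S = {x\<in>V. f x \<in> S'}"
  have S'sub: "S' \<subseteq> V'" using dd unfolding disj_dom_def by blast
  have fS: "f ` S = S'" unfolding S_def using S'sub fV by auto
  have SV: "S \<subseteq> V" unfolding S_def by auto
  have cS: "card S = card S'" using fS card_image[OF inj_on_subset[OF inj SV]] by simp
  have d2: "dist2 V E u w \<longleftrightarrow> dist2 V' E' (f u) (f w)" if "u \<in> V" "w \<in> V" for u w
  proof -
    have "u \<noteq> w \<longleftrightarrow> f u \<noteq> f w" using inj that by (auto dest: inj_onD)
    moreover have "(\<exists>z\<in>V. E u z \<and> E z w) \<longleftrightarrow> (\<exists>z\<in>V'. E' (f u) z \<and> E' z (f w))"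
      using fe that fV by auto
    ultimately show ?thesis unfolding dist2_def using fe that by auto
  qed
  have "\<forall>u\<in>V - S. (\<exists>w\<in>S. E u w) \<or> 2 \<le> card {w\<in>S. dist2 V E u w}"
  proof
    fix u assume u: "u \<in> V - S"
    then have fu: "f u \<in> V' - S'" using fV unfolding S_def by auto
    then have "(\<exists>w'\<in>S'. E' (f u) w') \<or> 2 \<le> card {w'\<in>S'. dist2 V' E' (f u) w'}"
      using dd unfolding disj_dom_def by blast
    then show "(\<exists>w\<in>S. E u w) \<or> 2 \<le> card {w\<in>S. dist2 V E u w}"
    proof
      assume "\<exists>w'\<in>S'. E' (f u) w'"
      then obtain w' where w': "w' \<in> S'" "E' (f u) w'" by blast
      then obtain w where w: "w \<in> S" "f w = w'" using fS by blast
      then have "E u w" using fe u w' SV by auto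
      then show ?thesis using w by blast
    next
      assume c: "2 \<le> card {w'\<in>S'. dist2 V' E' (f u) w'}"
      have "f ` {w\<in>S. dist2 V E u w} = {w'\<in>S'. dist2 V' E' (f u) w'}"
      proof
        show "f ` {w\<in>S. dist2 V E u w} \<subseteq> {w'\<in>S'. dist2 V' E' (f u) w'}"
          using d2 u SV fS by auto
        show "{w'\<in>S'. dist2 V' E' (f u) w'} \<subseteq> f ` {w\<in>S. dist2 V E u w}"
        proof
          fix w' assume "w' \<in> {w'\<in>S'. dist2 V' E' (f u) w'}"
          then obtain w where "w \<in> S" "f w = w'" "dist2 V' E' (f u) w'" using fS by auto
          then show "w' \<in> f ` {w\<in>S. dist2 V E u w}" using d2 u SV by auto
        qed
      qed
      moreover have "card (f ` {w\<in>S. dist2 V E u w}) = card {w\<in>S. dist2 V E u w}"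
        by (rule card_image) (rule inj_on_subset[OF inj], use SV in auto)
      ultimately show ?thesis using c by simp
    qed
  qed
  then have "disj_dom V E S" unfolding disj_dom_def using SV by blast
  then show ?thesis using cS by blast
qed

theorem lemma2p4:
  fixes V :: "'a set" and E :: "'a \<Rightarrow> 'a \<Rightarrow> bool"
  assumes "in_famF V E"
    and "\<not> graph_iso V E G4V G4E"
    and "\<not> graph_iso V E G5V G5E"
  shows "real (gamma_d2 V E) \<le> real (card V) / 3"
proof -
  obtain gs where len: "2 \<le> length gs" and sub: "set gs \<subseteq> D1 \<union> D2" and iso: "graph_iso V E (famV gs) (famE gs)"
    using assms(1) unfolding in_famF_def by blast
  have w4: "wfg (Cyc 4)" "wfg (Pend 4 1)" "wfg (Cyc 5)" using wfg_D12 by (auto simp: D1_def D2_def)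
  have bad: "gs \<notin> {[Cyc 4, Pend 4 1], [Pend 4 1, Cyc 4], [Cyc 4, Cyc 5], [Cyc 5, Cyc 4]}"
  proof
    assume "gs \<in> {[Cyc 4, Pend 4 1], [Pend 4 1, Cyc 4], [Cyc 4, Cyc 5], [Cyc 5, Cyc 4]}"
    moreover
    { assume "gs = [Cyc 4, Pend 4 1]" then have False using iso assms(2) by (simp add: G4V_def G4E_def) }
    moreover
    { assume "gs = [Pend 4 1, Cyc 4]"
      then have "graph_iso V E (famV [Pend 4 1, Cyc 4]) (famE [Pend 4 1, Cyc 4])" using iso by simp
      then have "graph_iso V E G4V G4E" unfolding G4V_def G4E_def by (rule iso_trans[OF _ iso_swap[OF w4(2) w4(1)]])
      then have False using assms(2) by simp }
    moreover
    { assume "gs = [Cyc 4, Cyc 5]" then have False using iso assms(3) by (simp add: G5V_def G5E_def) }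
    moreover
    { assume "gs = [Cyc 5, Cyc 4]"
      then have "graph_iso V E (famV [Cyc 5, Cyc 4]) (famE [Cyc 5, Cyc 4])" using iso by simp
      then have "graph_iso V E G5V G5E" unfolding G5V_def G5E_def by (rule iso_trans[OF _ iso_swap[OF w4(3) w4(1)]])
      then have False using assms(3) by simp }
    ultimately show False by blast
  qed
  obtain S' where S': "disj_dom (famV gs) (famE gs) S'" "3 * card S' \<le> card (famV gs)"
    using main_fam[OF len sub bad] by blast
  obtain S where S: "disj_dom V E S" "card S = card S'"
    using iso_transfer_dom[OF iso finite_famV S'(1)] by blast
  obtain f where f: "bij_betw f V (famV gs)" using iso unfolding graph_iso_def by blast
  have finV: "finite V" using f finite_famV bij_betw_finite by blast
  have cV: "card V = card (famV gs)" using f by (rule bij_betw_same_card)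
  have fin: "finite {card S | S. disj_dom V E S}"
  proof (rule finite_subset)
    show "{card S | S. disj_dom V E S} \<subseteq> {..card V}"
      using finV by (auto simp: disj_dom_def intro: card_mono)
  qed simp
  have "gamma_d2 V E \<le> card S" unfolding gamma_d2_def using fin S(1) by (intro Min_le) auto
  then have "3 * gamma_d2 V E \<le> card V" using S(2) S'(2) cV by simp
  then have "3 * real (gamma_d2 V E) \<le> real (card V)" by (metis of_nat_le_iff of_nat_mult of_nat_numeral)
  then show ?thesis by simp
qed

end
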